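(* Let $\mathbb{U}$ be a monster model of CODF, $K\preceq\mathbb{U}$ a small model, and $a\in\mathbb{U}$ such that $\dim(\bar\delta^{n-1}(a)/K)=n$. Then there is $b\in\mathbb{U}$ such that $tp(\bar\delta^{n-1}(b)/K)=tp(\bar\delta^{n-1}(a)/K)$ and $\delta^k(b)=0$ for all $k\geq n$.
   Context: CODF is the theory of closed ordered differential fields (model completion of the theory of ordered fields with a derivation $\delta$, no compatibility with the order assumed); its models are real closed. $\bar\delta^{n-1}(a)=(a,\delta(a),\dots,\delta^{n-1}(a))\in\mathbb{U}^n$. $tp(\cdot/K)$ denotes the type in the ordered ring language $\{<,+,\cdot,0,1\}$, and $\dim(c/K)$ is the o-minimal (topological) dimension of $tp(c/K)$ in the real closed field $\mathbb{U}$, i.e. the minimal dimension of a semialgebraic set over $K$ containing $c$. *)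

theory Defs
  imports Main "HOL-Computational_Algebra.Polynomial"
begin

text \<open>Language {<,+,*,0,1,delta}. Variables are indexed by natural numbers;
  parameters are supplied through the valuation.\<close>

datatype tm = Var nat | Zero | One | Add tm tm | Mul tm tm | Der tm

datatype fm = Eq tm tm | Lt tm tm | Neg fm | Conj fm fm | Ex nat fm

fun eval :: "('a::linordered_field \<Rightarrow> 'a) \<Rightarrow> (nat \<Rightarrow> 'a) \<Rightarrow> tm \<Rightarrow> 'a" where
  "eval d v (Var i) = v i"
| "eval d v Zero = 0"
| "eval d v One = 1"
| "eval d v (Add s t) = eval d v s + eval d v t"
| "eval d v (Mul s t) = eval d v s * eval d v t"
| "eval d v (Der t) = d (eval d v t)"

fun sat :: "('a::linordered_field \<Rightarrow> 'a) \<Rightarrow> 'a set \<Rightarrow> fm \<Rightarrow> (nat \<Rightarrow> 'a) \<Rightarrow> bool" where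
  "sat d S (Eq s t) v = (eval d v s = eval d v t)"
| "sat d S (Lt s t) v = (eval d v s < eval d v t)"
| "sat d S (Neg p) v = (\<not> sat d S p v)"
| "sat d S (Conj p q) v = (sat d S p v \<and> sat d S q v)"
| "sat d S (Ex i p) v = (\<exists>x\<in>S. sat d S p (v(i := x)))"

fun ring_tm :: "tm \<Rightarrow> bool" where
  "ring_tm (Var i) = True"
| "ring_tm Zero = True"
| "ring_tm One = True"
| "ring_tm (Add s t) = (ring_tm s \<and> ring_tm t)"
| "ring_tm (Mul s t) = (ring_tm s \<and> ring_tm t)"
| "ring_tm (Der t) = False"

fun ring_fm :: "fm \<Rightarrow> bool" where
  "ring_fm (Eq s t) = (ring_tm s \<and> ring_tm t)"
| "ring_fm (Lt s t) = (ring_tm s \<and> ring_tm t)"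
| "ring_fm (Neg p) = ring_fm p"
| "ring_fm (Conj p q) = (ring_fm p \<and> ring_fm q)"
| "ring_fm (Ex i p) = ring_fm p"

fun tm_vars :: "tm \<Rightarrow> nat set" where
  "tm_vars (Var i) = {i}"
| "tm_vars Zero = {}"
| "tm_vars One = {}"
| "tm_vars (Add s t) = tm_vars s \<union> tm_vars t"
| "tm_vars (Mul s t) = tm_vars s \<union> tm_vars t"
| "tm_vars (Der t) = tm_vars t"

fun pderiv_tm :: "nat \<Rightarrow> tm \<Rightarrow> tm" where
  "pderiv_tm j (Var i) = (if i = j then One else Zero)"
| "pderiv_tm j Zero = Zero"
| "pderiv_tm j One = Zero"
| "pderiv_tm j (Add s t) = Add (pderiv_tm j s) (pderiv_tm j t)"
| "pderiv_tm j (Mul s t) = Add (Mul (pderiv_tm j s) t) (Mul s (pderiv_tm j t))"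
| "pderiv_tm j (Der t) = Zero"

definition derivation :: "('a::linordered_field \<Rightarrow> 'a) \<Rightarrow> bool" where
  "derivation d \<longleftrightarrow> (\<forall>x y. d (x + y) = d x + d y) \<and> (\<forall>x y. d (x * y) = x * d y + d x * y)"

definition real_closed :: "'a::linordered_field itself \<Rightarrow> bool" where
  "real_closed _ \<longleftrightarrow> (\<forall>x::'a. 0 \<le> x \<longrightarrow> (\<exists>y. y * y = x))
     \<and> (\<forall>p::'a poly. odd (degree p) \<longrightarrow> (\<exists>x. poly p x = 0))"

text \<open>Singer's scheme: for f of order n (polynomial f* in x_0..x_n, coefficients in U given as
  parameters at indices > n via c) and g_1..g_m of order < n: if there is a_0..a_n with
  f*(a)=0, (d f*/d x_n)(a) \<noteq> 0, g_i*(a) > 0, then there is y with f(y)=0 and g_i(y) > 0.\<close>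
definition CODF :: "('a::linordered_field \<Rightarrow> 'a) \<Rightarrow> bool" where
  "CODF d \<longleftrightarrow> real_closed TYPE('a) \<and> derivation d \<and>
    (\<forall>n f gs c.
       ring_tm f \<and> (\<forall>g\<in>set gs. ring_tm g \<and> n \<notin> tm_vars g) \<longrightarrow>
       (\<exists>a::nat \<Rightarrow> 'a.
          (let w = (\<lambda>i. if i \<le> n then a i else c i) in
            eval d w f = 0 \<and> eval d w (pderiv_tm n f) \<noteq> 0 \<and> (\<forall>g\<in>set gs. eval d w g > 0)))
       \<longrightarrow>
       (\<exists>y::'a.
          (let w = (\<lambda>i. if i \<le> n then (d ^^ i) y else c i) in
            eval d w f = 0 \<and> (\<forall>g\<in>set gs. eval d w g > 0))))"

definition elem_sub :: "('a::linordered_field \<Rightarrow> 'a) \<Rightarrow> 'a set \<Rightarrow> bool" where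
  "elem_sub d K \<longleftrightarrow> 0 \<in> K \<and> 1 \<in> K \<and> (\<forall>x\<in>K. \<forall>y\<in>K. x + y \<in> K \<and> x * y \<in> K) \<and> (\<forall>x\<in>K. d x \<in> K)
     \<and> (\<forall>p v. (\<forall>i. v i \<in> K) \<longrightarrow> (sat d K p v \<longleftrightarrow> sat d UNIV p v))"

definition saturated :: "('a::linordered_field \<Rightarrow> 'a) \<Rightarrow> 'k rel \<Rightarrow> bool" where
  "saturated d kappa \<longleftrightarrow> (\<forall>(A::'a set) (\<Sigma>::(fm \<times> (nat \<Rightarrow> 'a)) set).
     (card_of A, kappa) \<in> ordLess \<and> (\<forall>(p, v)\<in>\<Sigma>. \<forall>i. i \<noteq> 0 \<longrightarrow> v i \<in> A) \<and>
     (\<forall>F. finite F \<and> F \<subseteq> \<Sigma> \<longrightarrow> (\<exists>b. \<forall>(p, v)\<in>F. sat d UNIV p (v(0 := b))))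
     \<longrightarrow> (\<exists>b. \<forall>(p, v)\<in>\<Sigma>. sat d UNIV p (v(0 := b))))"

definition automorphism :: "('a::linordered_field \<Rightarrow> 'a) \<Rightarrow> ('a \<Rightarrow> 'a) \<Rightarrow> bool" where
  "automorphism d s \<longleftrightarrow> bij s \<and> s 0 = 0 \<and> s 1 = 1 \<and> (\<forall>x y. s (x + y) = s x + s y)
     \<and> (\<forall>x y. s (x * y) = s x * s y) \<and> (\<forall>x y. x < y \<longleftrightarrow> s x < s y) \<and> (\<forall>x. s (d x) = d (s x))"

definition homogeneous :: "('a::linordered_field \<Rightarrow> 'a) \<Rightarrow> 'k rel \<Rightarrow> bool" where
  "homogeneous d kappa \<longleftrightarrow> (\<forall>(A::'a set) f.
     (card_of A, kappa) \<in> ordLess \<and>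
     (\<forall>p v. (\<forall>i. v i \<in> A) \<longrightarrow> (sat d UNIV p v \<longleftrightarrow> sat d UNIV p (f \<circ> v)))
     \<longrightarrow> (\<exists>s. automorphism d s \<and> (\<forall>x\<in>A. s x = f x)))"

definition monster :: "('a::linordered_field \<Rightarrow> 'a) \<Rightarrow> 'k rel \<Rightarrow> bool" where
  "monster d kappa \<longleftrightarrow> Card_order kappa \<and> BNF_Cardinal_Arithmetic.cinfinite kappa \<and> saturated d kappa \<and> homogeneous d kappa"

definition small :: "'k rel \<Rightarrow> 'a set \<Rightarrow> bool" where
  "small kappa K \<longleftrightarrow> (card_of K, kappa) \<in> ordLess"

text \<open>n-tuples are represented as functions nat => 'a, only the coordinates < n matter.\<close>
definition jet :: "('a \<Rightarrow> 'a) \<Rightarrow> 'a \<Rightarrow> nat \<Rightarrow> 'a" where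
  "jet d a = (\<lambda>i. (d ^^ i) a)"

definition tp_eq :: "('a::linordered_field \<Rightarrow> 'a) \<Rightarrow> 'a set \<Rightarrow> nat \<Rightarrow> (nat \<Rightarrow> 'a) \<Rightarrow> (nat \<Rightarrow> 'a) \<Rightarrow> bool" where
  "tp_eq d K n c e \<longleftrightarrow> (\<forall>p v. ring_fm p \<and> (\<forall>i. v i \<in> K) \<longrightarrow>
      (sat d UNIV p (\<lambda>i. if i < n then c i else v i) \<longleftrightarrow> sat d UNIV p (\<lambda>i. if i < n then e i else v i)))"

definition sa_def :: "('a::linordered_field \<Rightarrow> 'a) \<Rightarrow> 'a set \<Rightarrow> nat \<Rightarrow> (nat \<Rightarrow> 'a) set \<Rightarrow> bool" where
  "sa_def d K n X \<longleftrightarrow> (\<exists>p v. ring_fm p \<and> (\<forall>i. v i \<in> K) \<and>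
      X = {c. sat d UNIV p (\<lambda>i. if i < n then c i else v i)})"

definition has_dim_ge :: "nat \<Rightarrow> (nat \<Rightarrow> 'a::linordered_field) set \<Rightarrow> nat \<Rightarrow> bool" where
  "has_dim_ge n X k \<longleftrightarrow> (\<exists>J. J \<subseteq> {..<n} \<and> card J = k \<and>
     (\<exists>l u. (\<forall>j\<in>J. l j < u j) \<and>
        (\<forall>y. (\<forall>j\<in>J. l j < y j \<and> y j < u j) \<longrightarrow> (\<exists>c\<in>X. \<forall>j\<in>J. c j = y j))))"

text \<open>o-minimal dimension of a (nonempty) set X \<subseteq> U^n.\<close>
definition sa_dim :: "nat \<Rightarrow> (nat \<Rightarrow> 'a::linordered_field) set \<Rightarrow> nat" where
  "sa_dim n X = Max {k. k \<le> n \<and> has_dim_ge n X k}"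

definition tp_dim :: "('a::linordered_field \<Rightarrow> 'a) \<Rightarrow> 'a set \<Rightarrow> nat \<Rightarrow> (nat \<Rightarrow> 'a) \<Rightarrow> nat" where
  "tp_dim d K n c = Min {sa_dim n X | X. sa_def d K n X \<and> c \<in> X}"

end

theory Submission
  imports Defs
begin

fun ren_tm :: "(nat \<Rightarrow> nat) \<Rightarrow> tm \<Rightarrow> tm" where
  "ren_tm s (Var i) = Var (s i)"
| "ren_tm s Zero = Zero"
| "ren_tm s One = One"
| "ren_tm s (Add a b) = Add (ren_tm s a) (ren_tm s b)"
| "ren_tm s (Mul a b) = Mul (ren_tm s a) (ren_tm s b)"
| "ren_tm s (Der a) = Der (ren_tm s a)"

fun ren :: "(nat \<Rightarrow> nat) \<Rightarrow> fm \<Rightarrow> fm" where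
  "ren s (Eq a b) = Eq (ren_tm s a) (ren_tm s b)"
| "ren s (Lt a b) = Lt (ren_tm s a) (ren_tm s b)"
| "ren s (Neg p) = Neg (ren s p)"
| "ren s (Conj p q) = Conj (ren s p) (ren s q)"
| "ren s (Ex i p) = Ex (s i) (ren s p)"

lemma eval_ren: "eval d w (ren_tm s t) = eval d (w \<circ> s) t"
  by (induction t) auto

lemma ring_tm_ren: "ring_tm (ren_tm s t) = ring_tm t"
  by (induction t) auto

lemma ring_ren: "ring_fm (ren s p) = ring_fm p"
  by (induction p) (auto simp: ring_tm_ren)

lemma sat_ren: "inj s \<Longrightarrow> sat d S (ren s p) w = sat d S p (w \<circ> s)"
proof (induction p arbitrary: w)
  case (Ex i p)
  have e: "\<And>x. (w(s i := x)) \<circ> s = (w \<circ> s)(i := x)"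
    using Ex.prems by (auto simp: fun_eq_iff inj_eq)
  have "sat d S (ren s (Ex i p)) w = (\<exists>x\<in>S. sat d S (ren s p) (w(s i := x)))" by simp
  also have "\<dots> = (\<exists>x\<in>S. sat d S p ((w(s i := x)) \<circ> s))" by (simp only: Ex.IH[OF Ex.prems])
  also have "\<dots> = (\<exists>x\<in>S. sat d S p ((w \<circ> s)(i := x)))" by (simp only: e)
  finally show ?case by (simp only: ren.simps sat.simps)
qed (auto simp: eval_ren)

fun dern :: "nat \<Rightarrow> tm \<Rightarrow> tm" where
  "dern 0 t = t"
| "dern (Suc k) t = Der (dern k t)"

lemma eval_dern: "eval d w (dern k t) = (d ^^ k) (eval d w t)"
  by (induction k) auto

fun build :: "nat \<Rightarrow> fm \<Rightarrow> fm" where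
  "build 0 q = q"
| "build (Suc k) q = Ex (Suc k) (Conj (Eq (Var (Suc k)) (dern k (Var 0))) (build k q))"

lemma sat_build: "sat d UNIV (build k q) w =
   sat d UNIV q (\<lambda>i. if 1 \<le> i \<and> i \<le> k then (d ^^ (i - 1)) (w 0) else w i)"
proof (induction k arbitrary: w)
  case 0
  have "(\<lambda>i. if 1 \<le> i \<and> i \<le> (0::nat) then (d ^^ (i - 1)) (w 0) else w i) = w" by auto
  then show ?case by simp
next
  case (Suc k)
  have eq: "(\<lambda>i. if 1 \<le> i \<and> i \<le> k then (d ^^ (i - 1)) ((w(Suc k := (d ^^ k) (w 0))) 0)
        else (w(Suc k := (d ^^ k) (w 0))) i)
     = (\<lambda>i. if 1 \<le> i \<and> i \<le> Suc k then (d ^^ (i - 1)) (w 0) else w i)"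
    by (auto simp: fun_eq_iff)
  show ?case using Suc eq by (simp add: eval_dern)
qed

lemma sem1:
  "sat d UNIV (build n (ren Suc p)) ((\<lambda>i. if i = 0 then 0 else v (i - 1))(0 := b))
   = sat d UNIV p (\<lambda>i. if i < n then jet d b i else v i)"
proof -
  have eq: "(\<lambda>i. if 1 \<le> i \<and> i \<le> n then (d ^^ (i - 1)) (((\<lambda>i. if i = 0 then 0 else v (i - 1))(0 := b)) 0)
        else ((\<lambda>i. if i = 0 then 0 else v (i - 1))(0 := b)) i) \<circ> Suc
     = (\<lambda>i. if i < n then jet d b i else v i)"
    by (auto simp: fun_eq_iff jet_def)
  show ?thesis by (simp only: sat_build sat_ren[OF inj_Suc] eq)
qed

lemma conj_comb:
  assumes "ring_fm p1" "ring_fm p2" "\<forall>i. v1 i \<in> K" "\<forall>i. v2 i \<in> K" "(0::'a::linordered_field) \<in> K"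
  shows "\<exists>p v. ring_fm p \<and> (\<forall>i. v i \<in> K) \<and> (\<forall>c. sat d UNIV p (\<lambda>i. if i < n then c i else v i)
     = (sat d UNIV p1 (\<lambda>i. if i < n then c i else v1 i) \<and> sat d UNIV p2 (\<lambda>i. if i < n then c i else v2 i)))"
proof -
  define s1 where "s1 = (\<lambda>i::nat. if i < n then i else n + 2 * (i - n))"
  define s2 where "s2 = (\<lambda>i::nat. if i < n then i else n + 2 * (i - n) + 1)"
  define v where "v = (\<lambda>j. if j < n then 0 else if even (j - n) then v1 (n + (j - n) div 2)
       else v2 (n + (j - n) div 2))"
  have i1: "inj s1" unfolding s1_def inj_def by auto
  have i2: "inj s2" unfolding s2_def inj_def by auto
  have vK: "\<forall>i. v i \<in> K" using assms unfolding v_def by auto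
  have e1: "\<And>c. (\<lambda>i. if i < n then c i else v i) \<circ> s1 = (\<lambda>i. if i < n then c i else v1 i)"
    by (auto simp: fun_eq_iff s1_def v_def)
  have e2: "\<And>c. (\<lambda>i. if i < n then c i else v i) \<circ> s2 = (\<lambda>i. if i < n then c i else v2 i)"
    by (auto simp: fun_eq_iff s2_def v_def)
  show ?thesis
    apply (rule exI[of _ "Conj (ren s1 p1) (ren s2 p2)"], rule exI[of _ v])
    using assms vK by (simp add: ring_ren sat_ren i1 i2 e1 e2)
qed

lemma half_lemma: "(l::'a::linordered_field) < u \<Longrightarrow> 0 < (l + u) / 2 + - l \<and> 0 < u + - 1 * ((l + u) / 2)"
  by (simp add: field_simps)

lemma box:
  fixes d :: "'a::linordered_field \<Rightarrow> 'a"
  assumes "CODF d" "\<forall>j<n. l j < u j"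
  shows "\<exists>y. (d ^^ n) y = 0 \<and> (\<forall>j<n. l j < (d ^^ j) y \<and> (d ^^ j) y < u j)"
proof -
  have ax: "\<And>n f gs c. ring_tm f \<and> (\<forall>g\<in>set gs. ring_tm g \<and> n \<notin> tm_vars g) \<longrightarrow>
       (\<exists>a::nat \<Rightarrow> 'a.
          (let w = (\<lambda>i. if i \<le> n then a i else c i) in
            eval d w f = 0 \<and> eval d w (pderiv_tm n f) \<noteq> 0 \<and> (\<forall>g\<in>set gs. eval d w g > 0)))
       \<longrightarrow>
       (\<exists>y::'a.
          (let w = (\<lambda>i. if i \<le> n then (d ^^ i) y else c i) in
            eval d w f = 0 \<and> (\<forall>g\<in>set gs. eval d w g > 0)))"
    using assms(1) unfolding CODF_def by blast
  define g1 where "g1 = (\<lambda>j. Add (Var j) (Var (n + 2 + 2 * j)))"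
  define g2 where "g2 = (\<lambda>j. Add (Var (n + 3 + 2 * j)) (Mul (Var (n + 1)) (Var j)))"
  define gs where "gs = map g1 [0..<n] @ map g2 [0..<n]"
  define c where "c = (\<lambda>i. if i = n + 1 then - 1 else if even (i - n) then - l ((i - n - 2) div 2)
      else u ((i - n - 3) div 2))"
  define a where "a = (\<lambda>i. if i < n then (l i + u i) / 2 else 0)"
  have ev: "\<And>W j. (\<forall>i>n. W i = c i) \<Longrightarrow> eval d W (g1 j) = W j + - l j \<and>
       eval d W (g2 j) = u j + - 1 * W j"
    unfolding g1_def g2_def by (simp add: c_def)
  have pre: "ring_tm (Var n) \<and> (\<forall>g\<in>set gs. ring_tm g \<and> n \<notin> tm_vars g)"
    unfolding gs_def g1_def g2_def by auto
  have ex: "\<exists>a::nat \<Rightarrow> 'a.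
          (let w = (\<lambda>i. if i \<le> n then a i else c i) in
            eval d w (Var n) = 0 \<and> eval d w (pderiv_tm n (Var n)) \<noteq> 0 \<and> (\<forall>g\<in>set gs. eval d w g > 0))"
    apply (rule exI[of _ a])
    using assms(2) half_lemma ev[of "\<lambda>i. if i \<le> n then a i else c i"]
    by (auto simp: Let_def a_def gs_def)
  obtain y where y: "let w = (\<lambda>i. if i \<le> n then (d ^^ i) y else c i) in
            eval d w (Var n) = 0 \<and> (\<forall>g\<in>set gs. eval d w g > 0)"
    using ax[of "Var n" gs n c] pre ex by blast
  have "(d ^^ n) y = 0" using y by (simp add: Let_def)
  moreover have "\<forall>j<n. l j < (d ^^ j) y \<and> (d ^^ j) y < u j"
  proof (intro allI impI)
    fix j assume j: "j < n"
    have "g1 j \<in> set gs" "g2 j \<in> set gs" using j unfolding gs_def by auto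
    then have "0 < (d ^^ j) y + - l j" "0 < u j + - 1 * (d ^^ j) y"
      using y j ev[of "\<lambda>i. if i \<le> n then (d ^^ i) y else c i" j] by (auto simp: Let_def)
    then show "l j < (d ^^ j) y \<and> (d ^^ j) y < u j" by auto
  qed
  ultimately show ?thesis by blast
qed

lemma gen:
  fixes d :: "'a::linordered_field \<Rightarrow> 'a"
  assumes codf: "CODF d" and td: "tp_dim d K n (jet d a) = n" and rp: "ring_fm p"
    and vK: "\<forall>i. v i \<in> K" and sa: "sat d UNIV p (\<lambda>i. if i < n then jet d a i else v i)"
  shows "\<exists>b. (d ^^ n) b = 0 \<and> sat d UNIV p (\<lambda>i. if i < n then jet d b i else v i)"
proof -
  define X where "X = {c. sat d UNIV p (\<lambda>i. if i < n then c i else v i)}"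
  have sX: "sa_def d K n X" unfolding sa_def_def X_def using rp vK by blast
  have aX: "jet d a \<in> X" unfolding X_def using sa by simp
  have dimle: "\<And>Y. jet d a \<in> Y \<Longrightarrow> sa_dim n Y \<in> {k. k \<le> n \<and> has_dim_ge n Y k}"
  proof -
    fix Y assume "jet d a \<in> Y"
    then have "has_dim_ge n Y 0" unfolding has_dim_ge_def by (intro exI[of _ "{}"]) auto
    then have ne: "{k. k \<le> n \<and> has_dim_ge n Y k} \<noteq> {}" by auto
    have fi: "finite {k. k \<le> n \<and> has_dim_ge n Y k}" by auto
    show "sa_dim n Y \<in> {k. k \<le> n \<and> has_dim_ge n Y k}"
      unfolding sa_dim_def by (rule Max_in[OF fi ne])
  qed
  define S where "S = {sa_dim n Y | Y. sa_def d K n Y \<and> jet d a \<in> Y}"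
  have "S \<subseteq> {..n}" unfolding S_def using dimle by auto
  then have fS: "finite S" using finite_subset by blast
  have inS: "sa_dim n X \<in> S" unfolding S_def using sX aX by blast
  have "Min S \<le> sa_dim n X" using fS inS by (rule Min_le)
  moreover have "Min S = n" using td unfolding tp_dim_def S_def by simp
  ultimately have hd: "has_dim_ge n X n" using dimle[OF aX]
    by (metis (mono_tags, lifting) le_antisym mem_Collect_eq)
  then obtain J l u where J: "J \<subseteq> {..<n}" "card J = n" and lu: "\<forall>j\<in>J. l j < u j"
    and bx: "\<forall>y. (\<forall>j\<in>J. l j < y j \<and> y j < u j) \<longrightarrow> (\<exists>c\<in>X. \<forall>j\<in>J. c j = y j)"
    unfolding has_dim_ge_def by blast
  have JJ: "J = {..<n}" using J by (simp add: card_subset_eq)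
  obtain y where y: "(d ^^ n) y = 0" "\<forall>j<n. l j < (d ^^ j) y \<and> (d ^^ j) y < u j"
    using box[OF codf, of n l u] lu JJ by auto
  obtain c where c: "c \<in> X" "\<forall>j<n. c j = jet d y j"
    using bx[rule_format, of "jet d y"] y JJ by (auto simp: jet_def)
  have "(\<lambda>i. if i < n then c i else v i) = (\<lambda>i. if i < n then jet d y i else v i)"
    using c by auto
  then show ?thesis using c(1) y(1) unfolding X_def by (intro exI[of _ y]) auto
qed

theorem lemma2p5:
  fixes d :: "'a::linordered_field \<Rightarrow> 'a" and kappa :: "'k rel"
    and K :: "'a set" and a :: 'a and n :: nat
  assumes "CODF d"
    and "monster d kappa"
    and "small kappa K"
    and "elem_sub d K"
    and "tp_dim d K n (jet d a) = n"
  shows "\<exists>b. tp_eq d K n (jet d b) (jet d a) \<and> (\<forall>k\<ge>n. (d ^^ k) b = 0)"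
proof -
  have K0: "(0::'a) \<in> K" using assms(4) unfolding elem_sub_def by (rule conjunct1)
  define S1 where "S1 = {(build n (ren Suc p), (\<lambda>i. if i = 0 then 0 else v (i - 1))) | p v.
     ring_fm p \<and> (\<forall>i. v i \<in> K) \<and> sat d UNIV p (\<lambda>i. if i < n then jet d a i else v i)}"
  define S where "S = insert (Eq (dern n (Var 0)) Zero, \<lambda>i. 0) S1"
  have sat': "saturated d kappa" using assms(2) unfolding monster_def by (rule conjunct1[OF conjunct2[OF conjunct2]])
  have A1: "(card_of K, kappa) \<in> ordLess" using assms(3) unfolding small_def .
  have A2: "\<forall>(p, v)\<in>S. \<forall>i. i \<noteq> 0 \<longrightarrow> v i \<in> K"
    unfolding S_def S1_def using K0 by auto
  have fin: "\<And>F. finite F \<Longrightarrow> F \<subseteq> S1 \<Longrightarrow> \<exists>p v. ring_fm p \<and> (\<forall>i. v i \<in> K) \<and>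
      sat d UNIV p (\<lambda>i. if i < n then jet d a i else v i) \<and>
      (\<forall>b. sat d UNIV p (\<lambda>i. if i < n then jet d b i else v i) \<longrightarrow>
          (\<forall>(q, w)\<in>F. sat d UNIV q (w(0 := b))))"
  proof -
    fix F assume "finite F" "F \<subseteq> S1"
    then show "?thesis F"
    proof (induction F rule: finite_induct)
      case empty
      show ?case by (rule exI[of _ "Eq Zero Zero"], rule exI[of _ "\<lambda>i. 0"]) (simp add: K0)
    next
      case (insert x F)
      have "F \<subseteq> S1" using insert.prems by auto
      from insert.IH[OF this] obtain p v where pv: "ring_fm p" "\<forall>i. v i \<in> K"
        "sat d UNIV p (\<lambda>i. if i < n then jet d a i else v i)"
        "\<forall>b. sat d UNIV p (\<lambda>i. if i < n then jet d b i else v i) \<longrightarrow>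
          (\<forall>(q, w)\<in>F. sat d UNIV q (w(0 := b)))" by blast
      from insert.prems obtain p2 v2 where x: "x = (build n (ren Suc p2), (\<lambda>i. if i = 0 then 0 else v2 (i - 1)))"
        and p2: "ring_fm p2" "\<forall>i. v2 i \<in> K" "sat d UNIV p2 (\<lambda>i. if i < n then jet d a i else v2 i)"
        unfolding S1_def by auto
      obtain p3 v3 where p3: "ring_fm p3" "\<forall>i. v3 i \<in> K"
        "\<forall>c. sat d UNIV p3 (\<lambda>i. if i < n then c i else v3 i)
         = (sat d UNIV p (\<lambda>i. if i < n then c i else v i) \<and> sat d UNIV p2 (\<lambda>i. if i < n then c i else v2 i))"
        using conj_comb[OF pv(1) p2(1) pv(2) p2(2) K0] by blast
      have "\<forall>b. sat d UNIV p3 (\<lambda>i. if i < n then jet d b i else v3 i) \<longrightarrow>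
          (\<forall>(q, w)\<in>insert x F. sat d UNIV q (w(0 := b)))"
      proof (intro allI impI)
        fix b assume "sat d UNIV p3 (\<lambda>i. if i < n then jet d b i else v3 i)"
        then have h: "sat d UNIV p (\<lambda>i. if i < n then jet d b i else v i)"
           "sat d UNIV p2 (\<lambda>i. if i < n then jet d b i else v2 i)" using p3(3) by blast+
        have "sat d UNIV (build n (ren Suc p2)) ((\<lambda>i. if i = 0 then 0 else v2 (i - 1))(0 := b))"
          using h(2) by (simp only: sem1)
        moreover have "\<forall>(q, w)\<in>F. sat d UNIV q (w(0 := b))" using pv(4) h(1) by blast
        ultimately show "\<forall>(q, w)\<in>insert x F. sat d UNIV q (w(0 := b))"
          unfolding ball_simps x case_prod_conv by blast
      qed
      note fin3 = this
      have a3: "sat d UNIV p3 (\<lambda>i. if i < n then jet d a i else v3 i)" using p3(3) pv(3) p2(3) by blast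
      show ?case by (rule exI[of _ p3], rule exI[of _ v3], intro conjI) (fact p3(1), fact p3(2), fact a3, fact fin3)
    qed
  qed
  have A3: "\<forall>F. finite F \<and> F \<subseteq> S \<longrightarrow> (\<exists>b. \<forall>(p, v)\<in>F. sat d UNIV p (v(0 := b)))"
  proof (intro allI impI)
    fix F assume F: "finite F \<and> F \<subseteq> S"
    then have "finite (F - {(Eq (dern n (Var 0)) Zero, \<lambda>i. 0)})" "F - {(Eq (dern n (Var 0)) Zero, \<lambda>i. 0)} \<subseteq> S1"
      unfolding S_def by auto
    from fin[OF this] obtain p v where pv: "ring_fm p" "\<forall>i. v i \<in> K"
      "sat d UNIV p (\<lambda>i. if i < n then jet d a i else v i)"
      "\<forall>b. sat d UNIV p (\<lambda>i. if i < n then jet d b i else v i) \<longrightarrow>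
          (\<forall>(q, w)\<in>F - {(Eq (dern n (Var 0)) Zero, \<lambda>i. 0)}. sat d UNIV q (w(0 := b)))" by blast
    obtain b where bb: "(d ^^ n) b = 0 \<and> sat d UNIV p (\<lambda>i. if i < n then jet d b i else v i)"
      using gen[OF assms(1) assms(5) pv(1) pv(2) pv(3)] by (rule exE)
    note b = conjunct1[OF bb] conjunct2[OF bb]
    have r1: "\<forall>(q, w)\<in>F - {(Eq (dern n (Var 0)) Zero, \<lambda>i. 0)}. sat d UNIV q (w(0 := b))"
      using pv(4) b(2) by blast
    have r2: "sat d UNIV (Eq (dern n (Var 0)) Zero) ((\<lambda>i. 0)(0 := b))"
      using b(1) by (simp add: eval_dern)
    have "\<forall>(q, w)\<in>F. sat d UNIV q (w(0 := b))"
    proof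
      fix x assume "x \<in> F"
      then show "case x of (q, w) \<Rightarrow> sat d UNIV q (w(0 := b))"
        using r1 r2 by (cases "x = (Eq (dern n (Var 0)) Zero, \<lambda>i. 0)") auto
    qed
    then show "\<exists>b. \<forall>(p, v)\<in>F. sat d UNIV p (v(0 := b))" by blast
  qed
  obtain b where b: "\<forall>(p, v)\<in>S. sat d UNIV p (v(0 := b))"
    using sat'[unfolded saturated_def, rule_format, of K S] A1 A2 A3 by blast
  have "sat d UNIV (Eq (dern n (Var 0)) Zero) ((\<lambda>i. 0)(0 := b))"
    using b unfolding S_def by blast
  then have bn: "(d ^^ n) b = 0" by (simp add: eval_dern)
  have d0: "d 0 = 0"
  proof -
    have "derivation d" using assms(1) unfolding CODF_def by (rule conjunct1[OF conjunct2])
    then have "d (0 + 0) = d 0 + d 0" unfolding derivation_def by blast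
    then show ?thesis by simp
  qed
  have dz: "(d ^^ m) 0 = 0" for m by (induction m) (auto simp: d0)
  have hi: "\<forall>k\<ge>n. (d ^^ k) b = 0"
  proof (intro allI impI)
    fix k assume "n \<le> k"
    then obtain m where "k = m + n" by (metis le_add_diff_inverse2)
    then show "(d ^^ k) b = 0" by (simp add: funpow_add bn dz)
  qed
  have one: "\<And>p v. ring_fm p \<Longrightarrow> (\<forall>i. v i \<in> K) \<Longrightarrow>
     sat d UNIV p (\<lambda>i. if i < n then jet d a i else v i) \<Longrightarrow>
     sat d UNIV p (\<lambda>i. if i < n then jet d b i else v i)"
  proof -
    fix p v assume h: "ring_fm p" "\<forall>i. v i \<in> K" "sat d UNIV p (\<lambda>i. if i < n then jet d a i else v i)"
    then have "(build n (ren Suc p), (\<lambda>i. if i = 0 then 0 else v (i - 1))) \<in> S"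
      unfolding S_def S1_def by blast
    then show "sat d UNIV p (\<lambda>i. if i < n then jet d b i else v i)"
      using b sem1[of d n p v b] by blast
  qed
  have "tp_eq d K n (jet d b) (jet d a)"
    unfolding tp_eq_def
  proof (intro allI impI)
    fix p and v :: "nat \<Rightarrow> 'a" assume h: "ring_fm p \<and> (\<forall>i. v i \<in> K)"
    show "sat d UNIV p (\<lambda>i. if i < n then jet d b i else v i) =
          sat d UNIV p (\<lambda>i. if i < n then jet d a i else v i)"
    proof
      assume "sat d UNIV p (\<lambda>i. if i < n then jet d b i else v i)"
      show "sat d UNIV p (\<lambda>i. if i < n then jet d a i else v i)"
      proof (rule ccontr)
        assume "\<not> sat d UNIV p (\<lambda>i. if i < n then jet d a i else v i)"
        then have "sat d UNIV (Neg p) (\<lambda>i. if i < n then jet d a i else v i)" by (simp only: sat.simps not_False_eq_True)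
        moreover have hp: "ring_fm (Neg p)" using h by simp
        moreover have hv: "\<forall>i. v i \<in> K" using h by blast
        ultimately have "sat d UNIV (Neg p) (\<lambda>i. if i < n then jet d b i else v i)"
          using one by blast
        then show False using \<open>sat d UNIV p (\<lambda>i. if i < n then jet d b i else v i)\<close> by simp
      qed
    next
      assume "sat d UNIV p (\<lambda>i. if i < n then jet d a i else v i)"
      then show "sat d UNIV p (\<lambda>i. if i < n then jet d b i else v i)"
        using one[of p v] h by blast
    qed
  qed
  then show ?thesis using hi by blast
qed

end
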